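(* Let $P\subset\mathbb R^d$ be a $d$-polytope, $S$ a simplex facet of $P$, and $\mathcal F,\mathcal N\subseteq\operatorname{adj}(S)$ disjoint with $V_S(\mathcal F,\mathcal N;P)\neq\emptyset$. Then for any two points $v,w\in V_S(\mathcal F,\mathcal N;P)$ the polytopes $\operatorname{conv}(P\cup\{v\})$ and $\operatorname{conv}(P\cup\{w\})$ are combinatorially equivalent.
   Context: For a facet $F$ of $P$ let $H_F=\{x:\langle x,a_F\rangle=\ell_F\}$ be its affine hull, oriented so that $P\subseteq\{x:\langle x,a_F\rangle\geq\ell_F\}$; put $H_F^+=\{x:\langle x,a_F\rangle>\ell_F\}$, $H_F^-=\{x:\langle x,a_F\rangle<\ell_F\}$. $\operatorname{adj}(S)$ is the set of facets sharing a ridge with $S$. A simplex facet is a facet combinatorially equivalent to a $(d-1)$-simplex. $V_S(\mathcal F,\mathcal N;P)$ is the set of points lying in $H_F^-$ for $F\in\mathcal N\cup\{S\}$, in $H_F$ for $F\in\mathcal F$, and in $H_F^+$ for all other facets $F$ of $P$. *)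

theory Defs
  imports "HOL-Analysis.Analysis"
begin

definition comb_equiv :: "'a::euclidean_space set \<Rightarrow> 'a set \<Rightarrow> bool" where
  "comb_equiv P Q \<longleftrightarrow> (\<exists>f. bij_betw f {F. F face_of P} {G. G face_of Q} \<and>
      (\<forall>F1 F2. F1 face_of P \<longrightarrow> F2 face_of P \<longrightarrow> (F1 \<subseteq> F2 \<longleftrightarrow> f F1 \<subseteq> f F2)))"

definition full_polytope :: "'a::euclidean_space set \<Rightarrow> bool" where
  "full_polytope P \<longleftrightarrow> polytope P \<and> aff_dim P = int DIM('a)"

definition ridge_of :: "'a::euclidean_space set \<Rightarrow> 'a set \<Rightarrow> bool" (infixr \<open>ridge'_of\<close> 50) where
  "R ridge_of P \<longleftrightarrow> R face_of P \<and> R \<noteq> {} \<and> aff_dim R = aff_dim P - 2"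

definition adj :: "'a::euclidean_space set \<Rightarrow> 'a set \<Rightarrow> 'a set set" where
  "adj P S = {F. F facet_of P \<and> F \<noteq> S \<and> (\<exists>R. R ridge_of P \<and> R \<subseteq> F \<and> R \<subseteq> S)}"

definition simplex_facet :: "'a::euclidean_space set \<Rightarrow> 'a set \<Rightarrow> bool" where
  "simplex_facet P S \<longleftrightarrow> S facet_of P \<and>
     (\<exists>T. (int DIM('a) - 1) simplex T \<and> comb_equiv S T)"

text \<open>Oriented supporting hyperplane data of a facet F: a \<noteq> 0, aff F = {a.x = l},
  P \<subseteq> {a.x \<ge> l}.  (Unique up to positive scaling, so the open half-spaces below are
  well defined.)\<close>
definition facet_normal :: "'a::euclidean_space set \<Rightarrow> 'a set \<Rightarrow> 'a \<Rightarrow> real \<Rightarrow> bool" where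
  "facet_normal P F a l \<longleftrightarrow> a \<noteq> 0 \<and> affine hull F = {x. inner x a = l} \<and>
     P \<subseteq> {x. inner x a \<ge> l}"

definition Hplus :: "'a::euclidean_space set \<Rightarrow> 'a set \<Rightarrow> 'a set" where
  "Hplus P F = {x. \<exists>a l. facet_normal P F a l \<and> inner x a > l}"

definition Hminus :: "'a::euclidean_space set \<Rightarrow> 'a set \<Rightarrow> 'a set" where
  "Hminus P F = {x. \<exists>a l. facet_normal P F a l \<and> inner x a < l}"

definition VS :: "'a::euclidean_space set \<Rightarrow> 'a set \<Rightarrow> 'a set set \<Rightarrow> 'a set set \<Rightarrow> 'a set" where
  "VS P S FF NN = {x. (\<forall>F. F facet_of P \<longrightarrow>
       (if F \<in> NN \<union> {S} then x \<in> Hminus P F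
        else if F \<in> FF then x \<in> affine hull F
        else x \<in> Hplus P F))}"

end

theory Submission
  imports Defs
begin


definition na :: "'a::euclidean_space set \<Rightarrow> 'a set \<Rightarrow> 'a" where
  "na P K = fst (SOME al. facet_normal P K (fst al) (snd al))"
definition nl :: "'a::euclidean_space set \<Rightarrow> 'a set \<Rightarrow> real" where
  "nl P K = snd (SOME al. facet_normal P K (fst al) (snd al))"
definition sf :: "'a::euclidean_space set \<Rightarrow> 'a set \<Rightarrow> 'a \<Rightarrow> real" where
  "sf P K x = inner x (na P K) - nl P K"

lemma sf_move: "sf P K (x + t *\<^sub>R (x - v)) = (1 + t) * sf P K x - t * sf P K v"
  by (simp add: sf_def inner_simps algebra_simps)

lemma sf_comb: "sf P K ((1 - m) *\<^sub>R p + m *\<^sub>R w) = (1 - m) * sf P K p + m * sf P K w"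
  by (simp add: sf_def inner_simps algebra_simps)

lemma small_t:
  fixes \<alpha> \<beta> :: "'b \<Rightarrow> real"
  assumes "finite I" "\<And>K. K \<in> I \<Longrightarrow> \<alpha> K > 0"
  shows "\<exists>t>0. \<forall>K\<in>I. \<forall>\<tau>. \<bar>\<tau>\<bar> \<le> t \<longrightarrow> (1 + \<tau>) * \<alpha> K - \<tau> * \<beta> K > 0"
  using assms
proof (induction I rule: finite_induct)
  case empty
  then show ?case by (rule_tac x=1 in exI) auto
next
  case (insert k I)
  then obtain t where t: "t > 0" "\<forall>K\<in>I. \<forall>\<tau>. \<bar>\<tau>\<bar> \<le> t \<longrightarrow> (1 + \<tau>) * \<alpha> K - \<tau> * \<beta> K > 0"
    by auto
  have ak: "\<alpha> k > 0" using insert by auto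
  define t1 where "t1 = \<alpha> k / (2 * (\<bar>\<alpha> k\<bar> + \<bar>\<beta> k\<bar> + 1))"
  have t1: "t1 > 0" using ak by (simp add: t1_def)
  have *: "(1 + \<tau>) * \<alpha> k - \<tau> * \<beta> k > 0" if "\<bar>\<tau>\<bar> \<le> t1" for \<tau>
  proof -
    have "\<bar>\<tau> * (\<alpha> k - \<beta> k)\<bar> \<le> t1 * (\<bar>\<alpha> k\<bar> + \<bar>\<beta> k\<bar> + 1)"
      by (simp add: abs_mult) (rule mult_mono, use that in auto)
    also have "\<dots> = \<alpha> k / 2" using ak
    proof -
      have "\<bar>\<alpha> k\<bar> + \<bar>\<beta> k\<bar> + 1 > 0" by linarith
      then show ?thesis by (simp add: t1_def field_simps)
    qed
    finally have "- (\<tau> * (\<alpha> k - \<beta> k)) \<le> \<alpha> k / 2" by (simp add: abs_le_iff)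
    moreover have "(1 + \<tau>) * \<alpha> k - \<tau> * \<beta> k = \<alpha> k + \<tau> * (\<alpha> k - \<beta> k)"
      by (simp add: algebra_simps)
    ultimately show ?thesis using ak by linarith
  qed
  show ?case
  proof (intro exI[of _ "min t t1"] conjI ballI allI impI)
    show "min t t1 > 0" using t t1 by simp
    fix K \<tau> assume K: "K \<in> insert k I" and tau: "\<bar>\<tau>\<bar> \<le> min t t1"
    show "(1 + \<tau>) * \<alpha> K - \<tau> * \<beta> K > 0"
    proof (cases "K = k")
      case True then show ?thesis using tau * by simp
    next
      case False then show ?thesis using K tau t by simp
    qed
  qed
qed

lemma lam_aux:
  fixes g :: "'b \<Rightarrow> real"
  assumes "finite J" "k \<in> J" "g k \<noteq> 0"
  shows "(\<Sum>K\<in>J. (if K = k then 1 + c / g k else 1) * g K) = (\<Sum>K\<in>J. g K) + c"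
proof -
  have "(\<Sum>K\<in>J. (if K = k then 1 + c / g k else 1) * g K) = (\<Sum>K\<in>J. g K + (if K = k then c else 0))"
  proof (rule sum.cong)
    fix K assume "K \<in> J"
    show "(if K = k then 1 + c / g k else 1) * g K = g K + (if K = k then c else 0)"
      using assms(3) by (cases "K = k") (simp_all add: distrib_right)
  qed simp
  also have "\<dots> = (\<Sum>K\<in>J. g K) + c" using assms by (simp add: sum.distrib)
  finally show ?thesis .
qed

lemma lamA:
  fixes g :: "'b \<Rightarrow> real"
  assumes "finite J" "k \<in> J" "g k > 0"
  shows "\<exists>lam. (\<forall>K\<in>J. lam K > 0) \<and> (\<Sum>K\<in>J. lam K * g K) > 0"
proof -
  define T where "T = (\<Sum>K\<in>J. g K)"
  define lam where "lam K = (if K = k then 1 + (\<bar>T\<bar> + 1) / g k else 1)" for K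
  have "(\<Sum>K\<in>J. lam K * g K) = T + (\<bar>T\<bar> + 1)"
    unfolding lam_def T_def using assms by (intro lam_aux) auto
  then have "(\<Sum>K\<in>J. lam K * g K) > 0" by linarith
  moreover have "(\<bar>T\<bar> + 1) / g k > 0" using assms by (intro divide_pos_pos) auto
  then have "\<forall>K\<in>J. lam K > 0" by (auto simp: lam_def)
  ultimately show ?thesis by blast
qed

lemma lamB:
  fixes g :: "'b \<Rightarrow> real"
  assumes "finite J" "p \<in> J" "g p > 0" "n \<in> J" "g n < 0"
  shows "\<exists>lam. (\<forall>K\<in>J. lam K > 0) \<and> (\<Sum>K\<in>J. lam K * g K) = 0"
proof -
  define T where "T = (\<Sum>K\<in>J. g K)"
  show ?thesis
  proof (cases "T \<ge> 0")
    case True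
    define lam where "lam K = (if K = n then 1 + (- T) / g n else 1)" for K
    have "(\<Sum>K\<in>J. lam K * g K) = T + (- T)"
      unfolding lam_def T_def using assms by (intro lam_aux) auto
    moreover have "(- T) / g n \<ge> 0" using assms True by (intro divide_nonpos_neg) auto
    then have "\<forall>K\<in>J. lam K > 0" by (auto simp: lam_def)
    ultimately show ?thesis by auto
  next
    case False
    define lam where "lam K = (if K = p then 1 + (- T) / g p else 1)" for K
    have "(\<Sum>K\<in>J. lam K * g K) = T + (- T)"
      unfolding lam_def T_def using assms by (intro lam_aux) auto
    moreover have "(- T) / g p \<ge> 0" using assms False by (intro divide_nonneg_pos) auto
    then have "\<forall>K\<in>J. lam K > 0" by (auto simp: lam_def)
    ultimately show ?thesis by auto
  qed
qed



locale fpol =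
  fixes P :: "'a::euclidean_space set"
  assumes full: "full_polytope P"
begin

lemma polyP: "polytope P" using full by (simp add: full_polytope_def)
lemma polyhP: "polyhedron P" by (simp add: polyP polytope_imp_polyhedron)
lemma convP: "convex P" by (simp add: polyhP polyhedron_imp_convex)
lemma compP: "compact P" by (simp add: polyP polytope_imp_compact)
lemma affP: "aff_dim P = int DIM('a)" using full by (simp add: full_polytope_def)
lemma affhP: "affine hull P = UNIV" using affP aff_dim_eq_full by blast

lemma hyper_normal:
  assumes K: "K facet_of P" and "a \<noteq> 0" "P \<subseteq> {x. a \<bullet> x \<le> b}" "K = P \<inter> {x. a \<bullet> x = b}"
  shows "facet_normal P K (- a) (- b)"
proof -
  have "affine hull K \<subseteq> {x. a \<bullet> x = b}"
    using assms by (intro hull_minimal) (auto simp: affine_hyperplane)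
  moreover have "aff_dim (affine hull K) = aff_dim {x. a \<bullet> x = b}"
    using K affP \<open>a \<noteq> 0\<close> by (simp add: facet_of_def aff_dim_hyperplane)
  moreover have "affine hull K \<noteq> {}" using K by (simp add: facet_of_def)
  ultimately have "affine hull K = {x. a \<bullet> x = b}"
    by (intro affine_dim_equal) (auto simp: affine_hyperplane)
  then show ?thesis using assms
    by (auto simp: facet_normal_def inner_commute)
qed

lemma normal_exists:
  assumes K: "K facet_of P"
  shows "\<exists>a l. facet_normal P K a l"
proof -
  obtain a b where "a \<noteq> 0" "P \<subseteq> {x. a \<bullet> x \<le> b}" "K = P \<inter> {x. a \<bullet> x = b}"
    using facet_of_polyhedron[OF polyhP K] by blast
  then show ?thesis using hyper_normal[OF K] by blast
qed

lemma normal_scale: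
  assumes K: "K facet_of P" and n1: "facet_normal P K a l" and n2: "facet_normal P K a' l'"
  shows "\<exists>\<kappa>>0. \<forall>x. inner x a' - l' = \<kappa> * (inner x a - l)"
proof -
  have a0: "a \<noteq> 0" and ah: "affine hull K = {x. inner x a = l}" and Pa: "P \<subseteq> {x. inner x a \<ge> l}"
    using n1 by (auto simp: facet_normal_def)
  have ah': "affine hull K = {x. inner x a' = l'}" and Pa': "P \<subseteq> {x. inner x a' \<ge> l'}"
    using n2 by (auto simp: facet_normal_def)
  have ex: "\<exists>p\<in>P. inner p a > l"
  proof (rule ccontr)
    assume "\<not> ?thesis"
    then have "P \<subseteq> affine hull K" using Pa ah by force
    then have "affine hull P \<subseteq> affine hull K"
      by (metis hull_hull hull_mono)
    then have "aff_dim P \<le> aff_dim K"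
      by (metis aff_dim_affine_hull aff_dim_subset)
    then show False using K by (simp add: facet_of_def)
  qed
  define \<kappa> where "\<kappa> = inner a a' / inner a a"
  have aa: "inner a a \<noteq> 0" using a0 by simp
  have eq: "inner x a' - l' = \<kappa> * (inner x a - l)" for x
  proof -
    define x' where "x' = x - ((inner x a - l) / inner a a) *\<^sub>R a"
    have "inner x' a = l" using aa by (simp add: x'_def inner_simps inner_commute)
    then have "inner x' a' = l'" using ah ah' by blast
    then show ?thesis
      unfolding x'_def \<kappa>_def using aa by (simp add: inner_simps inner_commute) (simp add: field_simps)
  qed
  obtain p where p: "p \<in> P" "inner p a > l" using ex by blast
  have "inner p a' - l' \<ge> 0" using Pa' p by auto
  moreover have "inner p a' \<noteq> l'"
  proof
    assume "inner p a' = l'"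
    then have "p \<in> affine hull K" using ah' by blast
    then show False using ah p by auto
  qed
  ultimately have "\<kappa> * (inner p a - l) > 0" using eq[of p] by auto
  then have "\<kappa> > 0" using p by (simp add: zero_less_mult_iff)
  then show ?thesis using eq by blast
qed

lemma fn_sf:
  assumes K: "K facet_of P"
  shows "facet_normal P K (na P K) (nl P K)"
proof -
  have "\<exists>al. facet_normal P K (fst al) (snd al)" using normal_exists[OF K] by auto
  from someI_ex[OF this] show ?thesis by (simp add: na_def nl_def)
qed

lemma sf_nonneg: "K facet_of P \<Longrightarrow> x \<in> P \<Longrightarrow> sf P K x \<ge> 0"
  using fn_sf by (force simp: facet_normal_def sf_def)

lemma sf_zero_iff:
  assumes K: "K facet_of P" and x: "x \<in> P"
  shows "sf P K x = 0 \<longleftrightarrow> x \<in> K"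
proof -
  have "K = affine hull K \<inter> P"
    using K convP face_of_imp_eq_affine_Int facet_of_imp_face_of by blast
  moreover have "affine hull K = {x. inner x (na P K) = nl P K}"
    using fn_sf[OF K] by (simp add: facet_normal_def)
  ultimately show ?thesis using x by (auto simp: sf_def)
qed

lemma sf_aff: "K facet_of P \<Longrightarrow> x \<in> affine hull K \<Longrightarrow> sf P K x = 0"
  using fn_sf by (force simp: facet_normal_def sf_def)

lemma sf_minus:
  assumes K: "K facet_of P" and x: "x \<in> Hminus P K" shows "sf P K x < 0"
proof -
  obtain a l where n: "facet_normal P K a l" "inner x a < l" using x by (auto simp: Hminus_def)
  obtain \<kappa> where "\<kappa> > 0" "\<forall>x. inner x (na P K) - nl P K = \<kappa> * (inner x a - l)"
    using normal_scale[OF K n(1) fn_sf[OF K]] by blast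
  then show ?thesis using n(2) by (simp add: sf_def mult_pos_neg)
qed

lemma sf_plus:
  assumes K: "K facet_of P" and x: "x \<in> Hplus P K" shows "sf P K x > 0"
proof -
  obtain a l where n: "facet_normal P K a l" "inner x a > l" using x by (auto simp: Hplus_def)
  obtain \<kappa> where "\<kappa> > 0" "\<forall>x. inner x (na P K) - nl P K = \<kappa> * (inner x a - l)"
    using normal_scale[OF K n(1) fn_sf[OF K]] by blast
  then show ?thesis using n(2) by (simp add: sf_def)
qed

lemma finite_facets: "finite {K. K facet_of P}"
  by (rule finite_subset[OF _ finite_polytope_faces[OF polyP]]) (auto simp: facet_of_imp_face_of)

lemma P_facets:
  assumes y: "\<And>K. K facet_of P \<Longrightarrow> sf P K y \<ge> 0"
  shows "y \<in> P"
proof -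
  obtain F where "finite F" and seq: "P = affine hull P \<inter> \<Inter>F"
             and faces: "\<And>h. h \<in> F \<Longrightarrow> \<exists>a b. a \<noteq> 0 \<and> h = {x. a \<bullet> x \<le> b}"
             and min: "\<And>F'. F' \<subset> F \<Longrightarrow> P \<subset> (affine hull P) \<inter> \<Inter>F'"
    using polyhP by (simp add: polyhedron_Int_affine_minimal) meson
  then obtain a b where ab: "\<And>h. h \<in> F \<Longrightarrow> a h \<noteq> 0 \<and> h = {x. a h \<bullet> x \<le> b h}"
    by metis
  have "y \<in> h" if h: "h \<in> F" for h
  proof -
    define C where "C = P \<inter> {x. a h \<bullet> x = b h}"
    have C: "C facet_of P"
      using facet_of_polyhedron_explicit[OF \<open>finite F\<close> seq ab min] h C_def by blast
    have "P \<subseteq> {x. a h \<bullet> x \<le> b h}" using h ab seq by blast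
    then have fn: "facet_normal P C (- a h) (- b h)"
      using hyper_normal[OF C] ab h C_def by blast
    obtain \<kappa> where "\<kappa> > 0" "\<forall>x. inner x (na P C) - nl P C = \<kappa> * (inner x (- a h) - (- b h))"
      using normal_scale[OF C fn fn_sf[OF C]] by blast
    then have "\<kappa> * (inner y (- a h) + b h) \<ge> 0" using y[OF C] by (simp add: sf_def)
    then have "inner y (- a h) + b h \<ge> 0" using \<open>\<kappa> > 0\<close> by (simp add: zero_le_mult_iff)
    then have "y \<in> {x. a h \<bullet> x \<le> b h}" by (simp add: inner_commute)
    with ab[OF h] show ?thesis by blast
  qed
  then show ?thesis using seq affhP by auto
qed

end


definition phi :: "'a::euclidean_space set \<Rightarrow> 'a set \<Rightarrow> ('a set \<Rightarrow> real) \<Rightarrow> 'a \<Rightarrow> real" where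
  "phi P F lam x = (\<Sum>K\<in>{K. K facet_of P \<and> F \<subseteq> K}. lam K * sf P K x)"

lemma phi_comb: "phi P F lam ((1 - m) *\<^sub>R p + m *\<^sub>R w) = (1 - m) * phi P F lam p + m * phi P F lam w"
  unfolding phi_def sf_comb by (simp add: sum_distrib_left sum.distrib[symmetric] algebra_simps)

lemma phi_lin: "\<exists>c b. \<forall>x. phi P F lam x = inner c x - b"
proof (intro exI allI)
  fix x
  show "phi P F lam x = inner (\<Sum>K\<in>{K. K facet_of P \<and> F \<subseteq> K}. lam K *\<^sub>R na P K) x -
      (\<Sum>K\<in>{K. K facet_of P \<and> F \<subseteq> K}. lam K * nl P K)"
    by (simp add: phi_def sf_def inner_sum_right sum_subtractf right_diff_distrib inner_commute)
qed

context fpol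
begin

lemma P_ne: "P \<noteq> {}" using affP by auto

lemma hullP: "convex hull P = P" by (simp add: convP convex_hull_eq)

lemma Q_mem:
  assumes "y \<in> convex hull (insert w P)"
  shows "\<exists>m p. 0 \<le> m \<and> m \<le> 1 \<and> p \<in> P \<and> y = (1 - m) *\<^sub>R p + m *\<^sub>R w"
proof -
  obtain u v b where "u \<ge> 0" "v \<ge> 0" "u + v = 1" "b \<in> P" "y = u *\<^sub>R w + v *\<^sub>R b"
    using assms convex_hull_insert[OF P_ne, of w] hullP by auto
  then have "0 \<le> u \<and> u \<le> 1 \<and> b \<in> P \<and> y = (1 - u) *\<^sub>R b + u *\<^sub>R w"
    by (simp add: add.commute eq_diff_eq)
  then show ?thesis by blast
qed

lemma Q_hull: "\<exists>V. finite V \<and> P = convex hull V \<and> convex hull (insert w P) = convex hull (insert w V)"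
proof -
  obtain V where V: "finite V" "P = convex hull V" using polyP polytope_def by blast
  have "convex hull (insert w P) \<subseteq> convex hull (insert w V)"
  proof (rule hull_minimal)
    show "insert w P \<subseteq> convex hull (insert w V)"
      using V by (simp add: hull_inc hull_mono subset_insertI)
  qed simp
  moreover have "convex hull (insert w V) \<subseteq> convex hull (insert w P)"
    using V by (intro hull_mono) (auto simp: hull_inc)
  ultimately show ?thesis using V by blast
qed

lemma polyhQ: "polyhedron (convex hull (insert w P))"
proof -
  obtain V where "finite V" "convex hull (insert w P) = convex hull (insert w V)"
    using Q_hull by blast
  then show ?thesis by (simp add: polytope_convex_hull polytope_imp_polyhedron)
qed

lemma no_facet_P: "\<not> (K facet_of P \<and> P \<subseteq> K)"
proof
  assume "K facet_of P \<and> P \<subseteq> K"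
  then have "K = P" "aff_dim K = aff_dim P - 1"
    using facet_of_imp_subset by (auto simp: facet_of_def)
  then show False by simp
qed

lemma perturb:
  assumes F: "F face_of P" and x: "x \<in> rel_interior F"
  shows "\<exists>t>0. \<forall>\<tau>. \<bar>\<tau>\<bar> \<le> t \<longrightarrow> (\<forall>K. K facet_of P \<and> F \<subseteq> K \<longrightarrow> \<tau> * sf P K v \<le> 0)
           \<longrightarrow> x + \<tau> *\<^sub>R (x - v) \<in> P"
proof -
  define I where "I = {K. K facet_of P \<and> \<not> F \<subseteq> K}"
  have fin: "finite I" using finite_facets by (rule finite_subset[rotated]) (auto simp: I_def)
  have xF: "x \<in> F" using x rel_interior_subset by blast
  have FP: "F \<subseteq> P" using F face_of_imp_subset by blast
  have xP: "x \<in> P" using xF FP by blast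
  have pos: "sf P K x > 0" if "K \<in> I" for K
  proof -
    have K: "K facet_of P" "\<not> F \<subseteq> K" using that by (auto simp: I_def)
    have "sf P K x \<noteq> 0"
    proof
      assume "sf P K x = 0"
      then have "x \<in> K" using sf_zero_iff[OF K(1) xP] by simp
      then have "F \<subseteq> K" using subset_of_face_of[OF facet_of_imp_face_of[OF K(1)] FP] x by blast
      then show False using K by blast
    qed
    then show ?thesis using sf_nonneg[OF K(1) xP] by linarith
  qed
  obtain t where t: "t > 0" "\<forall>K\<in>I. \<forall>\<tau>. \<bar>\<tau>\<bar> \<le> t \<longrightarrow> (1 + \<tau>) * sf P K x - \<tau> * sf P K v > 0"
    using small_t[OF fin, where \<alpha>="\<lambda>K. sf P K x" and \<beta>="\<lambda>K. sf P K v"] pos by blast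
  show ?thesis
  proof (intro exI[of _ t] conjI allI impI)
    fix \<tau> assume tau: "\<bar>\<tau>\<bar> \<le> t" and J: "\<forall>K. K facet_of P \<and> F \<subseteq> K \<longrightarrow> \<tau> * sf P K v \<le> 0"
    show "x + \<tau> *\<^sub>R (x - v) \<in> P"
    proof (rule P_facets)
      fix K assume K: "K facet_of P"
      show "sf P K (x + \<tau> *\<^sub>R (x - v)) \<ge> 0"
      proof (cases "F \<subseteq> K")
        case True
        then have "sf P K x = 0" using sf_zero_iff[OF K xP] xF by blast
        then show ?thesis using J K True by (simp add: sf_move)
      next
        case False
        then show ?thesis using t tau K by (auto simp: sf_move I_def intro: less_imp_le)
      qed
    qed
  qed (use t in auto)
qed

end


definition condA :: "'a::euclidean_space set \<Rightarrow> 'a \<Rightarrow> 'a set \<Rightarrow> bool" where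
  "condA P v F \<longleftrightarrow> (\<exists>K. K facet_of P \<and> F \<subseteq> K \<and> sf P K v > 0)"

definition condB :: "'a::euclidean_space set \<Rightarrow> 'a \<Rightarrow> 'a set \<Rightarrow> bool" where
  "condB P v F \<longleftrightarrow> F = {} \<or> (\<forall>K. K facet_of P \<and> F \<subseteq> K \<longrightarrow> sf P K v = 0) \<or>
     ((\<exists>K. K facet_of P \<and> F \<subseteq> K \<and> sf P K v > 0) \<and> (\<exists>K. K facet_of P \<and> F \<subseteq> K \<and> sf P K v < 0))"

context fpol
begin

lemma up_core:
  assumes F: "F face_of P" "F \<noteq> {}" "F \<noteq> P"
    and lam: "\<And>K. K facet_of P \<Longrightarrow> F \<subseteq> K \<Longrightarrow> lam K > 0"
    and x: "x \<in> P"
  shows "phi P F lam x \<ge> 0" and "phi P F lam x = 0 \<longleftrightarrow> x \<in> F"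
proof -
  define J where "J = {K. K facet_of P \<and> F \<subseteq> K}"
  have fin: "finite J" using finite_facets by (rule finite_subset[rotated]) (auto simp: J_def)
  have nn: "lam K * sf P K x \<ge> 0" if "K \<in> J" for K
  proof -
    have K1: "K facet_of P" "F \<subseteq> K" using that by (auto simp: J_def)
    have "lam K > 0" "sf P K x \<ge> 0" using lam[OF K1] sf_nonneg[OF K1(1) x] by auto
    then show ?thesis by simp
  qed
  show "phi P F lam x \<ge> 0" unfolding phi_def J_def[symmetric] using nn by (rule sum_nonneg)
  show "phi P F lam x = 0 \<longleftrightarrow> x \<in> F"
  proof
    assume "phi P F lam x = 0"
    then have "\<forall>K\<in>J. lam K * sf P K x = 0"
    proof -
      have "(\<Sum>K\<in>J. lam K * sf P K x) = 0" using \<open>phi P F lam x = 0\<close> unfolding phi_def J_def .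
      then show ?thesis using sum_nonneg_eq_0_iff[OF fin, of "\<lambda>K. lam K * sf P K x"] nn by simp
    qed
    have "x \<in> K" if K: "K \<in> J" for K
    proof -
      have K1: "K facet_of P" "F \<subseteq> K" using K by (auto simp: J_def)
      have "lam K > 0" using lam K1 by blast
      moreover have "lam K * sf P K x = 0" using \<open>\<forall>K\<in>J. lam K * sf P K x = 0\<close> K by blast
      ultimately have "sf P K x = 0" by simp
      then show ?thesis using sf_zero_iff[OF K1(1) x] by blast
    qed
    then have xi: "x \<in> \<Inter>{K. K facet_of P \<and> F \<subseteq> K}" by (auto simp: J_def)
    show "x \<in> F" by (subst face_of_polyhedron[OF polyhP F]) (rule xi)
  next
    assume "x \<in> F"
    have "sf P K x = 0" if K: "K \<in> J" for K
    proof -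
      have K1: "K facet_of P" "F \<subseteq> K" using K by (auto simp: J_def)
      then have "x \<in> K" using \<open>x \<in> F\<close> by blast
      then show ?thesis using sf_zero_iff[OF K1(1) x] by blast
    qed
    then have "\<forall>K\<in>J. sf P K x = 0" by blast
    then show "phi P F lam x = 0" unfolding phi_def J_def[symmetric] by simp
  qed
qed

lemma phi_Q_nonneg:
  assumes F: "F face_of P" "F \<noteq> {}" "F \<noteq> P"
    and lam: "\<And>K. K facet_of P \<Longrightarrow> F \<subseteq> K \<Longrightarrow> lam K > 0"
    and pw: "phi P F lam w \<ge> 0" and y: "y \<in> convex hull (insert w P)"
  shows "phi P F lam y \<ge> 0"
proof -
  obtain m p where mp: "0 \<le> m" "m \<le> 1" "p \<in> P" "y = (1 - m) *\<^sub>R p + m *\<^sub>R w"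
    using Q_mem[OF y] by blast
  have "phi P F lam p \<ge> 0" using up_core(1)[OF F lam mp(3)] .
  have "phi P F lam y = (1 - m) * phi P F lam p + m * phi P F lam w" using mp(4) by (simp add: phi_comb)
  moreover have "(1 - m) * phi P F lam p \<ge> 0" using mp \<open>phi P F lam p \<ge> 0\<close> by simp
  moreover have "m * phi P F lam w \<ge> 0" using mp pw by simp
  ultimately show ?thesis by linarith
qed

lemma face_part:
  assumes F: "F face_of P" "F \<noteq> {}" "F \<noteq> P"
    and lam: "\<And>K. K facet_of P \<Longrightarrow> F \<subseteq> K \<Longrightarrow> lam K > 0"
    and pw: "phi P F lam w \<ge> 0"
  shows "(convex hull (insert w P) \<inter> {x. phi P F lam x = 0}) face_of convex hull (insert w P)"
proof -
  obtain c b where cb: "\<forall>x. phi P F lam x = inner c x - b" using phi_lin by blast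
  have "(convex hull (insert w P) \<inter> {x. c \<bullet> x = b}) face_of convex hull (insert w P)"
  proof (rule face_of_Int_supporting_hyperplane_ge)
    fix x assume "x \<in> convex hull (insert w P)"
    then have "phi P F lam x \<ge> 0" using phi_Q_nonneg[OF F lam pw] by blast
    then show "c \<bullet> x \<ge> b" using cb by simp
  qed simp
  moreover have "{x. c \<bullet> x = b} = {x. phi P F lam x = 0}" using cb by auto
  ultimately show ?thesis by simp
qed

lemma upA:
  assumes wP: "w \<notin> P" and F: "F face_of P" "F \<noteq> {}" and cA: "condA P w F"
  shows "F face_of convex hull (insert w P)"
proof -
  define J where "J = {K. K facet_of P \<and> F \<subseteq> K}"
  have fin: "finite J" using finite_facets by (rule finite_subset[rotated]) (auto simp: J_def)
  obtain k where k: "k facet_of P" "F \<subseteq> k" "sf P k w > 0" using cA by (auto simp: condA_def)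
  have FP: "F \<noteq> P" using k no_facet_P by blast
  obtain lam where lam: "\<forall>K\<in>J. lam K > 0" "(\<Sum>K\<in>J. lam K * sf P K w) > 0"
    using lamA[OF fin, of k "\<lambda>K. sf P K w"] k by (auto simp: J_def)
  have lam': "\<And>K. K facet_of P \<Longrightarrow> F \<subseteq> K \<Longrightarrow> lam K > 0" using lam(1) by (auto simp: J_def)
  have pw: "phi P F lam w > 0" using lam(2) by (simp add: phi_def J_def)
  have "convex hull (insert w P) \<inter> {x. phi P F lam x = 0} = F"
  proof
    show "convex hull (insert w P) \<inter> {x. phi P F lam x = 0} \<subseteq> F"
    proof
      fix y assume y: "y \<in> convex hull (insert w P) \<inter> {x. phi P F lam x = 0}"
      obtain m p where mp: "0 \<le> m" "m \<le> 1" "p \<in> P" "y = (1 - m) *\<^sub>R p + m *\<^sub>R w"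
        using Q_mem y by blast
      have pp: "phi P F lam p \<ge> 0" using up_core(1)[OF F FP lam' mp(3)] .
      have "0 = (1 - m) * phi P F lam p + m * phi P F lam w" using y mp by (simp add: phi_comb)
      moreover have "(1 - m) * phi P F lam p \<ge> 0" using pp mp by simp
      moreover have "m * phi P F lam w \<ge> 0" using pw mp by simp
      ultimately have "m * phi P F lam w = 0" "(1 - m) * phi P F lam p = 0" by linarith+
      then have "m = 0" "phi P F lam p = 0" using pw by (simp_all add: mult_eq_0_iff) 
      then show "y \<in> F" using mp up_core(2)[OF F FP lam' mp(3)] by simp
    qed
  next
    have "F \<subseteq> P" using F face_of_imp_subset by blast
    moreover have "P \<subseteq> convex hull (insert w P)" by (rule subset_trans[OF subset_insertI hull_subset])
    ultimately have "F \<subseteq> convex hull (insert w P)" by (rule subset_trans)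
    then show "F \<subseteq> convex hull (insert w P) \<inter> {x. phi P F lam x = 0}"
      using up_core(2)[OF F FP lam'] \<open>F \<subseteq> P\<close> by auto
  qed
  moreover have "(convex hull (insert w P) \<inter> {x. phi P F lam x = 0}) face_of convex hull (insert w P)"
    by (rule face_part[OF F FP]) (use lam' pw in auto)
  ultimately show ?thesis by simp
qed

end


context fpol
begin

lemma upB:
  assumes wP: "w \<notin> P" and F: "F face_of P" and cB: "condB P w F"
  shows "convex hull (insert w F) face_of convex hull (insert w P) \<and> convex hull (insert w F) \<inter> P = F"
proof (cases "F = {}")
  case True
  obtain V where V: "finite V" "P = convex hull V" "convex hull (insert w P) = convex hull (insert w V)"
    using Q_hull by blast
  have "w extreme_point_of convex hull (insert w V)"
    using extreme_point_of_convex_hull_insert[OF V(1)] wP V(2) by blast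
  then have "{w} face_of convex hull (insert w P)" using V(3) face_of_singleton by metis
  then show ?thesis using True wP by simp
next
  case Fne: False
  have PQ: "P \<subseteq> convex hull (insert w P)" by (rule subset_trans[OF subset_insertI hull_subset])
  show ?thesis
  proof (cases "F = P")
    case True
    then show ?thesis using face_of_refl[OF convex_convex_hull] PQ by blast
  next
    case FP: False
    define J where "J = {K. K facet_of P \<and> F \<subseteq> K}"
    have fin: "finite J" using finite_facets by (rule finite_subset[rotated]) (auto simp: J_def)
    obtain lam where lam: "\<forall>K\<in>J. lam K > 0" "(\<Sum>K\<in>J. lam K * sf P K w) = 0"
    proof -
      consider (z) "\<forall>K. K facet_of P \<and> F \<subseteq> K \<longrightarrow> sf P K w = 0"
        | (m) "(\<exists>K. K facet_of P \<and> F \<subseteq> K \<and> sf P K w > 0) \<and> (\<exists>K. K facet_of P \<and> F \<subseteq> K \<and> sf P K w < 0)"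
        using cB Fne by (auto simp: condB_def)
      then show ?thesis
      proof cases
        case z
        have "(\<Sum>K\<in>J. 1 * sf P K w) = 0" using z by (simp add: J_def)
        then show ?thesis using that[of "\<lambda>_. 1"] by simp
      next
        case m
        then obtain p n where "p \<in> J" "sf P p w > 0" "n \<in> J" "sf P n w < 0" by (auto simp: J_def)
        then show ?thesis using lamB[OF fin, of p "\<lambda>K. sf P K w" n] that by blast
      qed
    qed
    have lam': "\<And>K. K facet_of P \<Longrightarrow> F \<subseteq> K \<Longrightarrow> lam K > 0" using lam(1) by (auto simp: J_def)
    have pw: "phi P F lam w = 0" using lam(2) by (simp add: phi_def J_def)
    have FsP: "F \<subseteq> P" using F face_of_imp_subset by blast
    have eq: "convex hull (insert w P) \<inter> {x. phi P F lam x = 0} = convex hull (insert w F)"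
    proof
      show "convex hull (insert w P) \<inter> {x. phi P F lam x = 0} \<subseteq> convex hull (insert w F)"
      proof
        fix y assume y: "y \<in> convex hull (insert w P) \<inter> {x. phi P F lam x = 0}"
        obtain m p where mp: "0 \<le> m" "m \<le> 1" "p \<in> P" "y = (1 - m) *\<^sub>R p + m *\<^sub>R w"
          using Q_mem y by blast
        have "0 = (1 - m) * phi P F lam p" using y mp pw by (simp add: phi_comb)
        then have "m = 1 \<or> phi P F lam p = 0" by simp
        then show "y \<in> convex hull (insert w F)"
        proof
          assume "m = 1"
          then show ?thesis using mp by (simp add: hull_inc)
        next
          assume "phi P F lam p = 0"
          then have "p \<in> F" using up_core(2)[OF F Fne FP lam' mp(3)] by simp
          then have "p \<in> convex hull (insert w F)" "w \<in> convex hull (insert w F)" by (auto simp: hull_inc)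
          then show ?thesis
            using convexD[OF convex_convex_hull, of p "insert w F" w "1 - m" m] mp by simp
        qed
      qed
    next
      obtain c b where cb: "\<forall>x. phi P F lam x = inner c x - b" using phi_lin by blast
      have cvx: "convex {x. phi P F lam x = 0}"
      proof -
        have "{x. phi P F lam x = 0} = {x. c \<bullet> x = b}" using cb by auto
        then show ?thesis by (simp add: convex_hyperplane)
      qed
      have "insert w F \<subseteq> {x. phi P F lam x = 0}"
        using pw up_core(2)[OF F Fne FP lam'] FsP by auto
      then have "convex hull (insert w F) \<subseteq> {x. phi P F lam x = 0}"
        using cvx by (rule hull_minimal)
      moreover have "convex hull (insert w F) \<subseteq> convex hull (insert w P)"
        using FsP by (intro hull_mono) auto
      ultimately show "convex hull (insert w F) \<subseteq> convex hull (insert w P) \<inter> {x. phi P F lam x = 0}"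
        by blast
    qed
    have "(convex hull (insert w P) \<inter> {x. phi P F lam x = 0}) face_of convex hull (insert w P)"
      by (rule face_part[OF F Fne FP]) (use lam' pw in auto)
    moreover have "convex hull (insert w F) \<inter> P = F"
    proof -
      have "convex hull (insert w F) \<inter> P = {x \<in> P. phi P F lam x = 0}"
        using eq[symmetric] PQ by auto
      also have "\<dots> = F" using up_core(2)[OF F Fne FP lam'] FsP by auto
      finally show ?thesis .
    qed
    ultimately show ?thesis using eq by simp
  qed
qed

end


context fpol
begin

lemma down:
  assumes vP: "v \<notin> P" and G: "G face_of convex hull (insert v P)"
  shows "(v \<notin> G \<longrightarrow> G \<subseteq> P \<and> G face_of P \<and> (G \<noteq> {} \<longrightarrow> condA P v G)) \<and>
         (v \<in> G \<longrightarrow> G = convex hull (insert v (G \<inter> P)) \<and> (G \<inter> P) face_of P \<and> condB P v (G \<inter> P))"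
proof -
  let ?Q = "convex hull (insert v P)"
  have "G exposed_face_of ?Q" using exposed_face_of_polyhedron[OF polyhQ, of G v] G by blast
  then obtain c b where Qc: "?Q \<subseteq> {x. c \<bullet> x \<le> b}" and Gq: "G = ?Q \<inter> {x. c \<bullet> x = b}"
    unfolding exposed_face_of_def by blast
  obtain s' where s': "s' \<subseteq> insert v P" "G = convex hull s'"
    using face_of_convex_hull_subset[OF compact_insert[OF compP] G] by blast
  have PQ: "P \<subseteq> ?Q" by (rule subset_trans[OF subset_insertI hull_subset])
  have vQ: "v \<in> ?Q" by (simp add: hull_inc)
  have s'G: "s' \<subseteq> G" using s'(2) hull_subset[of s' convex] by simp
  have cvG: "convex G" using G face_of_imp_convex by blast
  have A: "G \<subseteq> P \<and> G face_of P \<and> (G \<noteq> {} \<longrightarrow> condA P v G)" if vG: "v \<notin> G"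
  proof -
    have "s' \<subseteq> P" using s' s'G vG by blast
    then have "convex hull s' \<subseteq> convex hull P" by (rule hull_mono)
    then have GP: "G \<subseteq> P" using s'(2) hullP by simp
    have Gf: "G face_of P" using face_of_subset[OF G GP PQ] .
    have "condA P v G" if Gne: "G \<noteq> {}"
    proof (rule ccontr)
      assume "\<not> condA P v G"
      then have neg: "\<forall>K. K facet_of P \<and> G \<subseteq> K \<longrightarrow> sf P K v \<le> 0" by (auto simp: condA_def)
      obtain x where x: "x \<in> rel_interior G" using rel_interior_eq_empty cvG Gne by blast
      obtain t where t: "t > 0" "\<forall>\<tau>. \<bar>\<tau>\<bar> \<le> t \<longrightarrow> (\<forall>K. K facet_of P \<and> G \<subseteq> K \<longrightarrow> \<tau> * sf P K v \<le> 0)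
           \<longrightarrow> x + \<tau> *\<^sub>R (x - v) \<in> P"
        using perturb[OF Gf x, of v] by blast
      have "\<forall>K. K facet_of P \<and> G \<subseteq> K \<longrightarrow> t * sf P K v \<le> 0"
        using neg t(1) by (simp add: mult_nonneg_nonpos)
      then have yP: "x + t *\<^sub>R (x - v) \<in> P" using t by auto
      have xG: "x \<in> G" using x rel_interior_subset by blast
      then have cx: "c \<bullet> x = b" using Gq by auto
      have "c \<bullet> v \<le> b" using vQ Qc by auto
      moreover have "c \<bullet> v \<noteq> b" using vG vQ Gq by auto
      ultimately have cv: "c \<bullet> v < b" by simp
      have "c \<bullet> (x + t *\<^sub>R (x - v)) = b + t * (b - c \<bullet> v)"
        using cx by (simp add: inner_simps)
      moreover have "t * (b - c \<bullet> v) > 0" using t(1) cv by simp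
      moreover have "c \<bullet> (x + t *\<^sub>R (x - v)) \<le> b" using yP PQ Qc by auto
      ultimately show False by linarith
    qed
    then show ?thesis using GP Gf by blast
  qed
  have B: "G = convex hull (insert v (G \<inter> P)) \<and> (G \<inter> P) face_of P \<and> condB P v (G \<inter> P)" if vG: "v \<in> G"
  proof -
    have GPeq: "G \<inter> P = P \<inter> {x. c \<bullet> x = b}" using Gq PQ by blast
    have Ff: "(G \<inter> P) face_of P"
      unfolding GPeq using Qc PQ by (intro face_of_Int_supporting_hyperplane_le[OF convP]) auto
    have "s' \<subseteq> insert v (G \<inter> P)" using s' s'G by blast
    then have "convex hull s' \<subseteq> convex hull (insert v (G \<inter> P))" by (rule hull_mono)
    then have "G \<subseteq> convex hull (insert v (G \<inter> P))" using s'(2) by simp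
    moreover have "convex hull (insert v (G \<inter> P)) \<subseteq> G"
      using vG cvG by (intro hull_minimal) auto
    ultimately have Geq: "G = convex hull (insert v (G \<inter> P))" by blast
    define F where "F = G \<inter> P"
    have "condB P v F"
    proof (cases "F = {}")
      case True then show ?thesis by (simp add: condB_def)
    next
      case Fne: False
      have Ff': "F face_of P" using Ff unfolding F_def .
      have cvF: "convex F" using Ff' face_of_imp_convex by blast
      obtain x where x: "x \<in> rel_interior F" using rel_interior_eq_empty cvF Fne by blast
      have xF: "x \<in> F" using x rel_interior_subset by blast
      obtain t where t: "t > 0" "\<forall>\<tau>. \<bar>\<tau>\<bar> \<le> t \<longrightarrow> (\<forall>K. K facet_of P \<and> F \<subseteq> K \<longrightarrow> \<tau> * sf P K v \<le> 0)
           \<longrightarrow> x + \<tau> *\<^sub>R (x - v) \<in> P"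
        using perturb[OF Ff' x, of v] by blast
      have "x \<in> G" using xF unfolding F_def by blast
      then have cx: "c \<bullet> x = b" using Gq by blast
      have cv: "c \<bullet> v = b" using vG Gq by auto
      have key: "\<forall>K. K facet_of P \<and> F \<subseteq> K \<longrightarrow> sf P K v = 0"
        if tau: "\<bar>\<tau>\<bar> \<le> t" "\<tau> \<noteq> 0" "\<forall>K. K facet_of P \<and> F \<subseteq> K \<longrightarrow> \<tau> * sf P K v \<le> 0" for \<tau>
      proof (intro allI impI)
        fix K assume K: "K facet_of P \<and> F \<subseteq> K"
        have yP: "x + \<tau> *\<^sub>R (x - v) \<in> P" using t tau by blast
        have "c \<bullet> (x + \<tau> *\<^sub>R (x - v)) = b" using cx cv by (simp add: inner_simps)
        then have "x + \<tau> *\<^sub>R (x - v) \<in> F" using yP GPeq unfolding F_def by blast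
        then have "x + \<tau> *\<^sub>R (x - v) \<in> K" using K by blast
        then have "sf P K (x + \<tau> *\<^sub>R (x - v)) = 0" using sf_zero_iff[OF conjunct1[OF K] yP] by simp
        moreover have "x \<in> P" "x \<in> K" using K xF unfolding F_def by auto
        then have "sf P K x = 0" using sf_zero_iff[OF conjunct1[OF K]] by simp
        ultimately have "\<tau> * sf P K v = 0" by (simp add: sf_move)
        then show "sf P K v = 0" using tau(2) by simp
      qed
      show ?thesis
      proof (cases "\<forall>K. K facet_of P \<and> F \<subseteq> K \<longrightarrow> sf P K v \<le> 0")
        case True
        have tn: "\<forall>K. K facet_of P \<and> F \<subseteq> K \<longrightarrow> t * sf P K v \<le> 0"
        proof (intro allI impI)
          fix K assume "K facet_of P \<and> F \<subseteq> K"
          then have "sf P K v \<le> 0" using True by blast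
          then show "t * sf P K v \<le> 0" using mult_nonneg_nonpos[of t "sf P K v"] t(1) by linarith
        qed
        have "\<forall>K. K facet_of P \<and> F \<subseteq> K \<longrightarrow> sf P K v = 0" using key[of t, OF _ _ tn] t(1) by simp
        then show ?thesis by (simp add: condB_def)
      next
        case c1: False
        show ?thesis
        proof (cases "\<forall>K. K facet_of P \<and> F \<subseteq> K \<longrightarrow> sf P K v \<ge> 0")
          case True
          have tn2: "\<forall>K. K facet_of P \<and> F \<subseteq> K \<longrightarrow> (- t) * sf P K v \<le> 0"
          proof (intro allI impI)
            fix K assume "K facet_of P \<and> F \<subseteq> K"
            then have "sf P K v \<ge> 0" using True by blast
            then show "(- t) * sf P K v \<le> 0" using mult_nonpos_nonneg[of "- t" "sf P K v"] t(1) by linarith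
          qed
          have "\<forall>K. K facet_of P \<and> F \<subseteq> K \<longrightarrow> sf P K v = 0" using key[of "- t", OF _ _ tn2] t(1) by simp
          then show ?thesis by (simp add: condB_def)
        next
          case False
          obtain K1 where "K1 facet_of P \<and> F \<subseteq> K1 \<and> sf P K1 v > 0" using c1 by (meson not_le)
          moreover obtain K2 where "K2 facet_of P \<and> F \<subseteq> K2 \<and> sf P K2 v < 0" using False by (meson not_le)
          ultimately show ?thesis unfolding condB_def by blast
        qed
      qed
    qed
    then show ?thesis using Geq Ff unfolding F_def by blast
  qed
  show ?thesis using A B by blast
qed

end


definition fm :: "'a::euclidean_space set \<Rightarrow> 'a \<Rightarrow> 'a \<Rightarrow> 'a set \<Rightarrow> 'a set" where
  "fm P v w G = (if v \<in> G then convex hull (insert w (G \<inter> P)) else G)"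

definition sg :: "'a::euclidean_space set \<Rightarrow> 'a \<Rightarrow> 'a \<Rightarrow> bool" where
  "sg P v w \<longleftrightarrow> (\<forall>K. K facet_of P \<longrightarrow> (sf P K v > 0 \<longleftrightarrow> sf P K w > 0) \<and> (sf P K v < 0 \<longleftrightarrow> sf P K w < 0))"

lemma sg_sym: "sg P v w \<Longrightarrow> sg P w v" by (auto simp: sg_def)

lemma condA_tr: "sg P v w \<Longrightarrow> condA P v F \<Longrightarrow> condA P w F"
  unfolding sg_def condA_def by blast

lemma condB_tr:
  assumes s: "sg P v w" and c: "condB P v F" shows "condB P w F"
proof -
  have z: "K facet_of P \<Longrightarrow> sf P K v = 0 \<longleftrightarrow> sf P K w = 0" for K
    using s unfolding sg_def by (metis linorder_neqE_linordered_idom less_irrefl)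
  show ?thesis using c z s unfolding condB_def sg_def by metis
qed

context fpol
begin

lemma fm_face:
  assumes vP: "v \<notin> P" and wP: "w \<notin> P" and s: "sg P v w"
    and G: "G face_of convex hull (insert v P)"
  shows "fm P v w G face_of convex hull (insert w P)"
proof (cases "v \<in> G")
  case True
  then have "(G \<inter> P) face_of P" "condB P v (G \<inter> P)" using down[OF vP G] by auto
  then show ?thesis using upB[OF wP] condB_tr[OF s] True by (simp add: fm_def)
next
  case False
  then have d: "G face_of P" "G \<noteq> {} \<longrightarrow> condA P v G" using down[OF vP G] by auto
  show ?thesis
  proof (cases "G = {}")
    case True then show ?thesis using False by (simp add: fm_def)
  next
    case Gne: False
    then show ?thesis using upA[OF wP d(1) Gne] d(2) condA_tr[OF s] False by (simp add: fm_def)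
  qed
qed

lemma fm_inv:
  assumes vP: "v \<notin> P" and wP: "w \<notin> P" and s: "sg P v w"
    and G: "G face_of convex hull (insert v P)"
  shows "fm P w v (fm P v w G) = G"
proof (cases "v \<in> G")
  case True
  then have d: "G = convex hull (insert v (G \<inter> P))" "(G \<inter> P) face_of P" "condB P v (G \<inter> P)"
    using down[OF vP G] by auto
  have u: "convex hull (insert w (G \<inter> P)) \<inter> P = G \<inter> P"
    using upB[OF wP d(2) condB_tr[OF s d(3)]] by blast
  have "w \<in> convex hull (insert w (G \<inter> P))" by (simp add: hull_inc)
  then show ?thesis using True u d(1) by (simp add: fm_def)
next
  case False
  then have "G \<subseteq> P" using down[OF vP G] by auto
  then have "w \<notin> G" using wP by blast
  then show ?thesis using False by (simp add: fm_def)
qed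

lemma fm_mono:
  assumes vP: "v \<notin> P"
    and G1: "G1 face_of convex hull (insert v P)" and G2: "G2 face_of convex hull (insert v P)"
    and sub: "G1 \<subseteq> G2"
  shows "fm P v w G1 \<subseteq> fm P v w G2"
proof (cases "v \<in> G1")
  case True
  then have "v \<in> G2" using sub by blast
  moreover have "insert w (G1 \<inter> P) \<subseteq> insert w (G2 \<inter> P)" using sub by blast
  then have "convex hull (insert w (G1 \<inter> P)) \<subseteq> convex hull (insert w (G2 \<inter> P))" by (rule hull_mono)
  ultimately show ?thesis using True by (simp add: fm_def)
next
  case False
  note f1 = False
  show ?thesis
  proof (cases "v \<in> G2")
    case True
    have "G1 \<subseteq> P" using down[OF vP G1] False by auto
    then have "G1 \<subseteq> G2 \<inter> P" using sub by blast
    also have "\<dots> \<subseteq> convex hull (insert w (G2 \<inter> P))"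
      by (rule subset_trans[OF subset_insertI hull_subset])
    finally show ?thesis using True f1 by (simp add: fm_def)
  next
    case False
    then show ?thesis using f1 sub by (simp add: fm_def)
  qed
qed

lemma main:
  assumes vP: "v \<notin> P" and wP: "w \<notin> P" and s: "sg P v w"
  shows "comb_equiv (convex hull (insert v P)) (convex hull (insert w P))"
proof -
  have s': "sg P w v" using sg_sym[OF s] .
  have bij: "bij_betw (fm P v w) {F. F face_of convex hull (insert v P)} {G. G face_of convex hull (insert w P)}"
  proof (rule bij_betw_byWitness[where f'="fm P w v"])
    show "\<forall>a\<in>{F. F face_of convex hull (insert v P)}. fm P w v (fm P v w a) = a"
      using fm_inv[OF vP wP s] by blast
    show "\<forall>a\<in>{F. F face_of convex hull (insert w P)}. fm P v w (fm P w v a) = a"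
      using fm_inv[OF wP vP s'] by blast
    show "fm P v w ` {F. F face_of convex hull (insert v P)} \<subseteq> {G. G face_of convex hull (insert w P)}"
      using fm_face[OF vP wP s] by blast
    show "fm P w v ` {G. G face_of convex hull (insert w P)} \<subseteq> {F. F face_of convex hull (insert v P)}"
      using fm_face[OF wP vP s'] by blast
  qed
  have iff: "F1 \<subseteq> F2 \<longleftrightarrow> fm P v w F1 \<subseteq> fm P v w F2"
    if F1: "F1 face_of convex hull (insert v P)" and F2: "F2 face_of convex hull (insert v P)" for F1 F2
  proof
    assume "F1 \<subseteq> F2" then show "fm P v w F1 \<subseteq> fm P v w F2" using fm_mono[OF vP F1 F2] by blast
  next
    assume a: "fm P v w F1 \<subseteq> fm P v w F2"
    have "fm P w v (fm P v w F1) \<subseteq> fm P w v (fm P v w F2)"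
      using fm_mono[OF wP fm_face[OF vP wP s F1] fm_face[OF vP wP s F2] a] .
    then show "F1 \<subseteq> F2" using fm_inv[OF vP wP s F1] fm_inv[OF vP wP s F2] by simp
  qed
  show ?thesis unfolding comb_equiv_def using bij iff by blast
qed

end

theorem proposition2p3:
  fixes P S :: "'a::euclidean_space set" and FF NN :: "'a set set" and v w :: 'a
  assumes "full_polytope P"
    and "simplex_facet P S"
    and "FF \<subseteq> adj P S" and "NN \<subseteq> adj P S" and "FF \<inter> NN = {}"
    and "VS P S FF NN \<noteq> {}"
    and "v \<in> VS P S FF NN" and "w \<in> VS P S FF NN"
  shows "comb_equiv (convex hull (insert v P)) (convex hull (insert w P))"
proof -
  interpret fpol P using assms(1) by (unfold_locales)
  have S: "S facet_of P" using assms(2) by (simp add: simplex_facet_def)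
  have vs: "\<forall>F. F facet_of P \<longrightarrow> (if F \<in> NN \<union> {S} then x \<in> Hminus P F
        else if F \<in> FF then x \<in> affine hull F else x \<in> Hplus P F)" if "x \<in> VS P S FF NN" for x
    using that by (simp add: VS_def)
  have sgn: "(K \<in> NN \<union> {S} \<longrightarrow> sf P K x < 0) \<and> (K \<notin> NN \<union> {S} \<and> K \<in> FF \<longrightarrow> sf P K x = 0) \<and>
      (K \<notin> NN \<union> {S} \<and> K \<notin> FF \<longrightarrow> sf P K x > 0)"
    if x: "x \<in> VS P S FF NN" and K: "K facet_of P" for x K
    using vs[OF x] K sf_minus[OF K] sf_plus[OF K] sf_aff[OF K] by (auto split: if_splits)
  have s: "sg P v w"
    unfolding sg_def
  proof (intro allI impI)
    fix K assume K: "K facet_of P"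
    show "(sf P K v > 0 \<longleftrightarrow> sf P K w > 0) \<and> (sf P K v < 0 \<longleftrightarrow> sf P K w < 0)"
      using sgn[OF assms(7) K] sgn[OF assms(8) K] by (cases "K \<in> NN \<union> {S}"; cases "K \<in> FF") auto
  qed
  have "x \<notin> P" if x: "x \<in> VS P S FF NN" for x
    using sgn[OF x S] sf_nonneg[OF S] by fastforce
  then show ?thesis using main s assms(7,8) by blast
qed


end
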